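(* Let $\mathrm{k}$ be an infinite field and $\mathcal{A}$ a unital associative $\mathrm{k}$-algebra satisfying $\mathbf{H}_{\mathrm{s}}$. Let $V$ be an $n$-dimensional $\mathrm{k}$-subspace of $\mathcal{A}$ with $V\cap U(\mathcal{A})\neq\emptyset$, and let $\{x_1,\ldots,x_n\}$ be a basis of $V$ with $x_1$ invertible. Let $X=\{x_1+\alpha x_2+\cdots+\alpha^{n-1}x_n\mid\alpha\in\mathrm{k}\}$. Then: (1) any $n$ vectors of $X$ corresponding to $n$ distinct values of $\alpha$ form a basis of $V$; (2) infinitely many elements $x_1+\alpha x_2+\cdots+\alpha^{n-1}x_n$, $\alpha\in\mathrm{k}$, are invertible; (3) $X$ contains a basis of $V$ consisting of invertible elements.
   Context: $U(\mathcal{A})$ is the group of invertible elements. Hypothesis $\mathbf{H}_{\mathrm{s}}$: $\mathcal{A}$ is finite-dimensional over $\mathrm{k}$, or $\mathrm{k}\in\{\mathbb{R},\mathbb{C}\}$ and $\mathcal{A}$ is a Banach algebra over $\mathrm{k}$, or $\mathcal{A}$ is a finite product of field extensions of $\mathrm{k}$. *)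

theory Defs
  imports "HOL-Analysis.Analysis"
begin

definition k_algebra :: "('a::field \<Rightarrow> 'b::ring_1 \<Rightarrow> 'b) \<Rightarrow> bool" where
  "k_algebra s \<longleftrightarrow> vector_space s \<and>
     (\<forall>c x y. s c (x * y) = s c x * y \<and> s c (x * y) = x * s c y)"

definition units_of_alg :: "'b::ring_1 set" where
  "units_of_alg = {x. \<exists>y. x * y = 1 \<and> y * x = 1}"

definition fin_dim_alg :: "('a::field \<Rightarrow> 'b::ring_1 \<Rightarrow> 'b) \<Rightarrow> bool" where
  "fin_dim_alg s \<longleftrightarrow> (\<exists>B. finite B \<and> module.span s B = UNIV)"

text \<open>H_s, case 2: k is (isomorphic as a field to) \<real> or \<complex>, via phi, and A is a
  Banach algebra over k with respect to a norm N.\<close>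
definition banach_alg :: "('a::field \<Rightarrow> 'b::ring_1 \<Rightarrow> 'b) \<Rightarrow> bool" where
  "banach_alg s \<longleftrightarrow>
    (\<exists>(\<phi>::'a \<Rightarrow> complex) (N::'b \<Rightarrow> real).
       inj \<phi> \<and> (\<forall>a b. \<phi> (a + b) = \<phi> a + \<phi> b \<and> \<phi> (a * b) = \<phi> a * \<phi> b) \<and> \<phi> 1 = 1 \<and>
       (range \<phi> = \<real> \<or> range \<phi> = UNIV) \<and>
       (\<forall>x. N x \<ge> 0) \<and> (\<forall>x. N x = 0 \<longleftrightarrow> x = 0) \<and>
       (\<forall>x y. N (x + y) \<le> N x + N y) \<and>
       (\<forall>c x. N (s c x) = cmod (\<phi> c) * N x) \<and>
       (\<forall>x y. N (x * y) \<le> N x * N y) \<and>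
       (\<forall>f::nat \<Rightarrow> 'b. (\<forall>e>0. \<exists>M. \<forall>m\<ge>M. \<forall>k\<ge>M. N (f m - f k) < e)
            \<longrightarrow> (\<exists>L. \<forall>e>0. \<exists>M. \<forall>m\<ge>M. N (f m - L) < e)))"

text \<open>H_s, case 3: A is a finite product of field extensions of k, expressed internally:
  A is commutative and 1 is a finite sum of nonzero pairwise orthogonal idempotents e
  such that each factor eA (a ring with unit e) is a field.\<close>
definition prod_fields_alg :: "('a::field \<Rightarrow> 'b::ring_1 \<Rightarrow> 'b) \<Rightarrow> bool" where
  "prod_fields_alg s \<longleftrightarrow>
    (\<forall>x y::'b. x * y = y * x) \<and>
    (\<exists>E::'b set. finite E \<and> 0 \<notin> E \<and> (\<forall>e\<in>E. e * e = e) \<and>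
       (\<forall>e\<in>E. \<forall>f\<in>E. e \<noteq> f \<longrightarrow> e * f = 0) \<and> sum id E = 1 \<and>
       (\<forall>e\<in>E. \<forall>x. e * x \<noteq> 0 \<longrightarrow> (\<exists>y. (e * x) * (e * y) = e)))"

definition H_s :: "('a::field \<Rightarrow> 'b::ring_1 \<Rightarrow> 'b) \<Rightarrow> bool" where
  "H_s s \<longleftrightarrow> fin_dim_alg s \<or> banach_alg s \<or> prod_fields_alg s"

definition vpt :: "('a::field \<Rightarrow> 'b::ring_1 \<Rightarrow> 'b) \<Rightarrow> nat \<Rightarrow> (nat \<Rightarrow> 'b) \<Rightarrow> 'a \<Rightarrow> 'b" where
  "vpt s n x \<alpha> = (\<Sum>i=1..n. s (\<alpha> ^ (i - 1)) (x i))"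

end

theory Submission
  imports Defs "Jordan_Normal_Form.Determinant"
begin

lemma vpt_comb:
  assumes vs: "vector_space s"
  shows "(\<Sum>j\<in>J. s (c j) (vpt s n x (a j))) = (\<Sum>i=1..n. s (\<Sum>j\<in>J. c j * a j ^ (i-1)) (x i))"
proof -
  interpret vector_space s by fact
  have "(\<Sum>j\<in>J. s (c j) (vpt s n x (a j))) = (\<Sum>j\<in>J. \<Sum>i=1..n. s (c j * a j ^ (i-1)) (x i))"
    by (simp add: vpt_def scale_sum_right)
  also have "\<dots> = (\<Sum>i=1..n. \<Sum>j\<in>J. s (c j * a j ^ (i-1)) (x i))" by (rule sum.swap)
  also have "\<dots> = (\<Sum>i=1..n. s (\<Sum>j\<in>J. c j * a j ^ (i-1)) (x i))" by (simp add: scale_sum_left)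
  finally show ?thesis .
qed

lemma vandermonde_zero:
  fixes a :: "nat \<Rightarrow> 'a::field"
  assumes inj: "inj_on a {1..n}" and h: "\<forall>k<n. (\<Sum>j=1..n. c j * a j ^ k) = 0" and j0: "j0 \<in> {1..n}"
  shows "c j0 = 0"
proof -
  define q where "q = (\<Prod>l\<in>{1..n}-{j0}. [:- a l, 1:])"
  have "degree q \<le> (\<Sum>l\<in>{1..n}-{j0}. degree [:- a l, 1:])"
    unfolding q_def using degree_prod_sum_le[of "{1..n}-{j0}" "\<lambda>l. [:- a l, 1:]"] by (simp add: o_def)
  also have "\<dots> = card ({1..n}-{j0})" by simp
  also have "\<dots> < n" using j0 by (simp add: card_Diff_singleton)
  finally have dq: "degree q < n" .
  have "(\<Sum>j=1..n. c j * poly q (a j)) = (\<Sum>j=1..n. c j * (\<Sum>i\<le>degree q. coeff q i * a j ^ i))"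
    by (simp add: poly_altdef)
  also have "\<dots> = (\<Sum>i\<le>degree q. coeff q i * (\<Sum>j=1..n. c j * a j ^ i))"
    by (simp add: sum_distrib_left mult.assoc mult.left_commute) (rule sum.swap)
  also have "\<dots> = 0" using h dq by simp
  finally have s0: "(\<Sum>j=1..n. c j * poly q (a j)) = 0" .
  have pq: "poly q (a j) = (\<Prod>l\<in>{1..n}-{j0}. a j - a l)" for j
    by (simp add: q_def poly_prod)
  have z: "poly q (a j) = 0" if "j \<in> {1..n}" "j \<noteq> j0" for j
    unfolding pq proof (rule prod_zero)
    show "\<exists>l\<in>{1..n}-{j0}. a j - a l = 0" using that by (intro bexI[of _ j]) auto
  qed simp
  have nz: "poly q (a j0) \<noteq> 0"
    unfolding pq
  proof (subst prod_zero_iff, simp, rule notI)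
    assume "\<exists>l\<in>{1..n}-{j0}. a j0 - a l = 0"
    then obtain l where l: "l \<in> {1..n}-{j0}" "a j0 - a l = 0" by blast
    then have "a j0 = a l" by simp
    then have "j0 = l" using inj j0 l(1) unfolding inj_on_def by blast
    with l show False by simp
  qed
  have "(\<Sum>j=1..n. c j * poly q (a j)) = c j0 * poly q (a j0) + (\<Sum>j\<in>{1..n}-{j0}. c j * poly q (a j))"
    using j0 by (simp add: sum.remove)
  also have "(\<Sum>j\<in>{1..n}-{j0}. c j * poly q (a j)) = 0"
    using z by (intro sum.neutral) auto
  finally show ?thesis using s0 nz by simp
qed

lemma indep_family:
  assumes vs: "vector_space s" and inj: "inj_on f I" and fin: "finite I"
  shows "\<not> module.dependent s (f ` I) \<longleftrightarrow> (\<forall>c. (\<Sum>i\<in>I. s (c i) (f i)) = 0 \<longrightarrow> (\<forall>i\<in>I. c i = 0))"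
proof -
  interpret vector_space s by fact
  have re: "(\<Sum>v\<in>f`I. g v) = (\<Sum>i\<in>I. g (f i))" for g :: "'b \<Rightarrow> 'b"
    using inj by (simp add: sum.reindex)
  show ?thesis
  proof
    assume nd: "\<not> dependent (f ` I)"
    show "\<forall>c. (\<Sum>i\<in>I. s (c i) (f i)) = 0 \<longrightarrow> (\<forall>i\<in>I. c i = 0)"
    proof (intro allI impI ballI)
      fix c i assume S: "(\<Sum>i\<in>I. s (c i) (f i)) = 0" and i: "i \<in> I"
      define u where "u v = c (the_inv_into I f v)" for v
      have u: "u (f j) = c j" if "j \<in> I" for j using the_inv_into_f_f[OF inj that] u_def by simp
      have "(\<Sum>v\<in>f`I. s (u v) v) = 0" using S u by (simp add: re)
      with nd dependent_finite[of "f`I"] fin have "\<forall>v\<in>f`I. u v = 0" by auto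
      thus "c i = 0" using u i by auto
    qed
  next
    assume H: "\<forall>c. (\<Sum>i\<in>I. s (c i) (f i)) = 0 \<longrightarrow> (\<forall>i\<in>I. c i = 0)"
    show "\<not> dependent (f ` I)"
    proof
      assume "dependent (f ` I)"
      then obtain u where u: "\<exists>v\<in>f`I. u v \<noteq> 0" "(\<Sum>v\<in>f`I. s (u v) v) = 0"
        using dependent_finite[of "f`I"] fin by auto
      have "(\<Sum>i\<in>I. s (u (f i)) (f i)) = 0" using u(2) by (simp add: re)
      with H[rule_format, of "\<lambda>i. u (f i)"] have "\<forall>i\<in>I. u (f i) = 0" by blast
      with u(1) show False by auto
    qed
  qed
qed

lemma vpt_indep:
  assumes vs: "vector_space s"
    and xind: "\<forall>c. (\<Sum>i=1..n. s (c i) (x i)) = 0 \<longrightarrow> (\<forall>i\<in>{1..n}. c i = 0)"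
    and inj: "inj_on a {1..n}"
  shows "\<forall>c. (\<Sum>j=1..n. s (c j) (vpt s n x (a j))) = 0 \<longrightarrow> (\<forall>j\<in>{1..n}. c j = 0)"
proof (intro allI impI ballI)
  fix c j assume S: "(\<Sum>j=1..n. s (c j) (vpt s n x (a j))) = 0" and j: "j \<in> {1..n}"
  have "(\<Sum>i=1..n. s (\<Sum>j=1..n. c j * a j ^ (i-1)) (x i)) = 0"
    using S vpt_comb[OF vs] by metis
  with xind[rule_format, of "\<lambda>i. (\<Sum>j=1..n. c j * a j ^ (i-1))"] have h: "\<forall>i\<in>{1..n}. (\<Sum>j=1..n. c j * a j ^ (i-1)) = 0" by blast
  have "\<forall>k<n. (\<Sum>j=1..n. c j * a j ^ k) = 0"
  proof (intro allI impI)
    fix k assume "k < n"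
    then have "Suc k \<in> {1..n}" by auto
    from h[rule_format, OF this] show "(\<Sum>j=1..n. c j * a j ^ k) = 0" by simp
  qed
  from vandermonde_zero[OF inj this j] show "c j = 0" .
qed

lemma part1:
  assumes vs: "vector_space s"
    and injx: "inj_on x {1..n}" and ind: "\<not> module.dependent s (x ` {1..n})"
    and sp: "module.span s (x ` {1..n}) = V"
    and inja: "inj_on a {1..n}"
  shows "inj_on (\<lambda>j. vpt s n x (a j)) {1..n} \<and>
         \<not> module.dependent s ((\<lambda>j. vpt s n x (a j)) ` {1..n}) \<and>
         module.span s ((\<lambda>j. vpt s n x (a j)) ` {1..n}) = V"
proof -
  interpret vector_space s by fact
  define b where "b j = vpt s n x (a j)" for j
  have xind: "\<forall>c. (\<Sum>i=1..n. s (c i) (x i)) = 0 \<longrightarrow> (\<forall>i\<in>{1..n}. c i = 0)"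
    using indep_family[OF vs injx] ind by simp
  have bind: "\<forall>c. (\<Sum>j=1..n. s (c j) (b j)) = 0 \<longrightarrow> (\<forall>j\<in>{1..n}. c j = 0)"
    unfolding b_def by (rule vpt_indep[OF vs xind inja])
  have injb: "inj_on b {1..n}"
  proof (rule inj_onI, rule ccontr)
    fix j k assume j: "j \<in> {1..n}" and k: "k \<in> {1..n}" and e: "b j = b k" and ne: "j \<noteq> k"
    define c where "c i = (if i = j then 1 else if i = k then -1 else (0::'a))" for i
    have "(\<Sum>i=1..n. s (c i) (b i)) = (\<Sum>i=1..n. (if i = j then b i else 0) + (if i = k then - b i else 0))"
      by (rule sum.cong) (auto simp: c_def ne scale_minus_left)
    also have "\<dots> = b j - b k" using j k by (simp add: sum.distrib)
    finally have "(\<Sum>i=1..n. s (c i) (b i)) = 0" using e by simp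
    with bind j have "c j = 0" by blast
    thus False by (simp add: c_def)
  qed
  have bI: "\<not> dependent (b ` {1..n})" using indep_family[OF vs injb] bind by simp
  have bV: "b ` {1..n} \<subseteq> V"
  proof
    fix v assume "v \<in> b ` {1..n}"
    then obtain j where vj: "v = b j" by auto
    have "b j \<in> span (x ` {1..n})" unfolding b_def vpt_def
      by (intro span_sum span_scale) (auto intro: span_base)
    thus "v \<in> V" using vj sp by simp
  qed
  have s1: "span (b ` {1..n}) \<subseteq> V"
    unfolding sp[symmetric] by (rule span_minimal) (use bV sp in auto)
  have s2: "V \<subseteq> span (b ` {1..n})"
  proof (rule ccontr)
    assume "\<not> V \<subseteq> span (b ` {1..n})"
    then obtain v where v: "v \<in> V" "v \<notin> span (b ` {1..n})" by auto
    have iI: "independent (insert v (b ` {1..n}))" by (rule independent_insertI[OF v(2) bI])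
    have "insert v (b ` {1..n}) \<subseteq> span (x ` {1..n})" using v(1) bV sp by auto
    from independent_span_bound[OF _ iI this]
    have "card (insert v (b ` {1..n})) \<le> card (x ` {1..n})" by simp
    moreover have "card (insert v (b ` {1..n})) = Suc n"
      using v(2) span_base[of v "b ` {1..n}"] card_image[OF injb] by (subst card_insert_disjoint) auto
    moreover have "card (x ` {1..n}) = n" using card_image[OF injx] by simp
    ultimately show False by simp
  qed
  show ?thesis using injb bI s1 s2 unfolding b_def by auto
qed

lemma units_mult: "a \<in> units_of_alg \<Longrightarrow> b \<in> units_of_alg \<Longrightarrow> a * b \<in> units_of_alg"
proof -
  assume "a \<in> units_of_alg" "b \<in> units_of_alg"
  then obtain a' b' where "a * a' = 1" "a' * a = 1" "b * b' = 1" "b' * b = 1" by (auto simp: units_of_alg_def)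
  moreover have "(a * b) * (b' * a') = a * ((b * b') * a')" "(b' * a') * (a * b) = b' * ((a' * a) * b)"
    by (simp_all add: mult.assoc)
  ultimately have "(a * b) * (b' * a') = 1" "(b' * a') * (a * b) = 1" by simp_all
  then show ?thesis by (auto simp: units_of_alg_def)
qed

lemma kalg_vs: "k_algebra s \<Longrightarrow> vector_space s" by (simp add: k_algebra_def)

lemma kalg_mult_scale: "k_algebra s \<Longrightarrow> y * s c z = s c (y * z)" "k_algebra s \<Longrightarrow> s c y * z = s c (y * z)"
  unfolding k_algebra_def by metis+

lemma vpt_zero:
  assumes "k_algebra s" "1 \<le> n" shows "vpt s n x 0 = x 1"
proof -
  interpret vector_space s using assms kalg_vs by blast
  have "vpt s n x 0 = (\<Sum>i\<in>{1..n}. if i = 1 then x i else 0)"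
    unfolding vpt_def by (rule sum.cong) (auto simp: power_0_left)
  also have "\<dots> = x 1" using assms by simp
  finally show ?thesis .
qed

lemma prod_case:
  assumes ka: "k_algebra s" and pf: "prod_fields_alg s" and x1: "x 1 \<in> units_of_alg"
    and key: "\<forall>a. inj_on a {1..n} \<longrightarrow> x 1 \<in> module.span s ((\<lambda>j. vpt s n x (a j)) ` {1..n})"
  shows "finite {\<alpha>. vpt s n x \<alpha> \<notin> units_of_alg}"
proof -
  interpret vector_space s using ka kalg_vs by blast
  have pf': "(\<forall>x y::'b. x * y = y * x) \<and>
    (\<exists>E::'b set. finite E \<and> 0 \<notin> E \<and> (\<forall>e\<in>E. e * e = e) \<and>
       (\<forall>e\<in>E. \<forall>f\<in>E. e \<noteq> f \<longrightarrow> e * f = 0) \<and> sum id E = 1 \<and>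
       (\<forall>e\<in>E. \<forall>x. e * x \<noteq> 0 \<longrightarrow> (\<exists>y. (e * x) * (e * y) = e)))"
    using pf unfolding prod_fields_alg_def .
  have comm: "\<forall>x y::'b. x * y = y * x" using pf' by (rule conjunct1)
  obtain E :: "'b set" where EE: "finite E \<and> 0 \<notin> E \<and> (\<forall>e\<in>E. e * e = e) \<and>
       (\<forall>e\<in>E. \<forall>f\<in>E. e \<noteq> f \<longrightarrow> e * f = 0) \<and> sum id E = 1 \<and>
       (\<forall>e\<in>E. \<forall>x. e * x \<noteq> 0 \<longrightarrow> (\<exists>y. (e * x) * (e * y) = e))"
    using conjunct2[OF pf'] by (rule exE)
  have E: "finite E" "0 \<notin> E" "\<forall>e\<in>E. e * e = e" "sum id E = 1"
    "\<forall>e\<in>E. \<forall>x. e * x \<noteq> 0 \<longrightarrow> (\<exists>y. (e * x) * (e * y) = e)"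
    using EE by simp_all
  obtain x1i where x1i: "x 1 * x1i = 1" using x1 by (auto simp: units_of_alg_def)
  have fin_e: "finite {\<alpha>. e * vpt s n x \<alpha> = 0}" if e: "e \<in> E" for e
  proof (rule ccontr)
    assume "infinite {\<alpha>. e * vpt s n x \<alpha> = 0}"
    then obtain S where S: "S \<subseteq> {\<alpha>. e * vpt s n x \<alpha> = 0}" "finite S" "card S = n"
      using infinite_arbitrarily_large by blast
    obtain a where a: "bij_betw a {1..n} S" using ex_bij_betw_nat_finite_1[OF S(2)] S(3) by auto
    have "x 1 \<in> span ((\<lambda>j. vpt s n x (a j)) ` {1..n})"
      using key a by (auto simp: bij_betw_def)
    then obtain u where u: "x 1 = (\<Sum>v\<in>(\<lambda>j. vpt s n x (a j)) ` {1..n}. s (u v) v)"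
      using span_finite[of "(\<lambda>j. vpt s n x (a j)) ` {1..n}"] by auto
    have "e * x 1 = (\<Sum>v\<in>(\<lambda>j. vpt s n x (a j)) ` {1..n}. s (u v) (e * v))"
      unfolding u by (simp add: sum_distrib_left kalg_mult_scale[OF ka])
    also have "\<dots> = 0"
    proof (rule sum.neutral, rule ballI)
      fix v assume "v \<in> (\<lambda>j. vpt s n x (a j)) ` {1..n}"
      then obtain j where "j \<in> {1..n}" "v = vpt s n x (a j)" by auto
      then have "a j \<in> S" using a by (auto simp: bij_betw_def)
      then have "e * v = 0" using S(1) \<open>v = _\<close> by auto
      thus "s (u v) (e * v) = 0" by simp
    qed
    finally have "e * x 1 = 0" .
    moreover have "e = (e * x 1) * x1i" using x1i by (simp add: mult.assoc)
    ultimately have "e = 0" by simp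
    with e E(2) show False by simp
  qed
  have sub: "{\<alpha>. vpt s n x \<alpha> \<notin> units_of_alg} \<subseteq> (\<Union>e\<in>E. {\<alpha>. e * vpt s n x \<alpha> = 0})"
  proof (rule subsetI, rule ccontr)
    fix \<alpha> assume bad: "\<alpha> \<in> {\<alpha>. vpt s n x \<alpha> \<notin> units_of_alg}" and "\<alpha> \<notin> (\<Union>e\<in>E. {\<alpha>. e * vpt s n x \<alpha> = 0})"
    define P where "P = vpt s n x \<alpha>"
    have nz: "\<forall>e\<in>E. e * P \<noteq> 0" using \<open>\<alpha> \<notin> _\<close> P_def by auto
    define y where "y e = (SOME y. (e * P) * (e * y) = e)" for e
    have y: "(e * P) * (e * y e) = e" if "e \<in> E" for e
      unfolding y_def by (rule someI_ex) (use E(5) nz that in blast)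
    have "P * (\<Sum>e\<in>E. e * y e) = (\<Sum>e\<in>E. (e * P) * (e * y e))"
    proof (simp add: sum_distrib_left, rule sum.cong, simp)
      fix e assume "e \<in> E"
      have "(e * P) * (e * y e) = (P * e) * (e * y e)" using comm[rule_format, of e P] by simp
      also have "\<dots> = P * ((e * e) * y e)" by (simp add: mult.assoc)
      also have "\<dots> = P * (e * y e)" using E(3) \<open>e \<in> E\<close> by simp
      finally show "P * (e * y e) = (e * P) * (e * y e)" by simp
    qed
    also have "\<dots> = (\<Sum>e\<in>E. e)" using y by simp
    also have "\<dots> = 1" using E(4) by simp
    finally have "P * (\<Sum>e\<in>E. e * y e) = 1" .
    moreover have "(\<Sum>e\<in>E. e * y e) * P = P * (\<Sum>e\<in>E. e * y e)" using comm by blast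
    ultimately have "P \<in> units_of_alg" unfolding units_of_alg_def by auto
    with bad P_def show False by simp
  qed
  show ?thesis by (rule finite_subset[OF sub]) (use E(1) fin_e in auto)
qed


lemma N_sum_le:
  fixes N :: "'b::ab_group_add \<Rightarrow> real"
  assumes N00: "N 0 = 0" and tri: "\<forall>x y. N (x + y) \<le> N x + N y"
  shows "N (\<Sum>i\<in>A. f i) \<le> (\<Sum>i\<in>A. N (f i))"
proof (induction A rule: infinite_finite_induct)
  case (insert a A)
  have "N (\<Sum>i\<in>insert a A. f i) = N (f a + (\<Sum>i\<in>A. f i))" using insert by simp
  also have "\<dots> \<le> N (f a) + N (\<Sum>i\<in>A. f i)" using tri by blast
  also have "\<dots> \<le> N (f a) + (\<Sum>i\<in>A. N (f i))" using insert by simp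
  finally show ?case using insert by simp
qed (simp_all add: N00)

lemma geo_sum:
  fixes q :: real
  shows "k \<le> m \<Longrightarrow> (1 - q) * (\<Sum>j\<in>{k..<m}. q ^ j) = q ^ k - q ^ m"
proof (induction m)
  case 0 then show ?case by simp
next
  case (Suc m)
  show ?case
  proof (cases "k \<le> m")
    case True
    then have "(\<Sum>j\<in>{k..<Suc m}. q ^ j) = (\<Sum>j\<in>{k..<m}. q ^ j) + q ^ m" by simp
    then have "(1 - q) * (\<Sum>j\<in>{k..<Suc m}. q ^ j) = (1 - q) * (\<Sum>j\<in>{k..<m}. q ^ j) + (1 - q) * q ^ m"
      by (simp add: distrib_left)
    also have "\<dots> = q ^ k - q ^ m + (1 - q) * q ^ m" using Suc.IH[OF True] by simp
    also have "\<dots> = q ^ k - q ^ Suc m" by (simp add: algebra_simps)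
    finally show ?thesis .
  next
    case False
    then have "k = Suc m" using Suc by simp
    then show ?thesis by simp
  qed
qed

lemma tele:
  fixes z :: "'b::ring_1"
  shows "(1 - z) * (\<Sum>k<m. z ^ k) = 1 - z ^ m" "(\<Sum>k<m. z ^ k) * (1 - z) = 1 - z ^ m"
proof -
  show "(1 - z) * (\<Sum>k<m. z ^ k) = 1 - z ^ m"
  proof (induction m)
    case (Suc m)
    have "(1 - z) * (\<Sum>k<Suc m. z ^ k) = (1 - z) * (\<Sum>k<m. z ^ k) + (1 - z) * z ^ m"
      by (simp add: distrib_left)
    also have "\<dots> = 1 - z ^ m + (z ^ m - z * z ^ m)" using Suc.IH by (simp add: left_diff_distrib)
    also have "\<dots> = 1 - z ^ Suc m" by (simp add: power_Suc)
    finally show ?case .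
  qed simp
  show "(\<Sum>k<m. z ^ k) * (1 - z) = 1 - z ^ m"
  proof (induction m)
    case (Suc m)
    have "(\<Sum>k<Suc m. z ^ k) * (1 - z) = (\<Sum>k<m. z ^ k) * (1 - z) + z ^ m * (1 - z)"
      by (simp add: distrib_right)
    also have "\<dots> = 1 - z ^ m + (z ^ m - z ^ m * z)" using Suc.IH by (simp add: right_diff_distrib)
    also have "\<dots> = 1 - z ^ Suc m" by (simp only: power_Suc2) simp
    finally show ?case .
  qed simp
qed

lemma neumann:
  fixes N :: "'b::ring_1 \<Rightarrow> real" and z :: 'b
  assumes Nnn: "\<forall>x. N x \<ge> 0" and N0: "\<forall>x. N x = 0 \<longleftrightarrow> x = 0"
    and tri: "\<forall>x y. N (x + y) \<le> N x + N y"
    and neg: "\<forall>x. N (- x) = N x" and sub: "\<forall>x y. N (x * y) \<le> N x * N y"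
    and comp: "\<forall>f::nat \<Rightarrow> 'b. (\<forall>e>0. \<exists>M. \<forall>m\<ge>M. \<forall>k\<ge>M. N (f m - f k) < e)
            \<longrightarrow> (\<exists>L. \<forall>e>0. \<exists>M. \<forall>m\<ge>M. N (f m - L) < e)"
    and z: "N z < 1"
  shows "1 - z \<in> units_of_alg"
proof -
  define q where "q = N z"
  have q0: "0 \<le> q" "q < 1" using Nnn z q_def by auto
  have N00: "N 0 = 0" using N0 by simp
  define S where "S m = (\<Sum>k<m. z ^ k)" for m
  have pw: "N (z ^ Suc k) \<le> q ^ Suc k" for k
  proof (induction k)
    case 0 then show ?case by (simp add: q_def)
  next
    case (Suc k)
    have "N (z ^ Suc (Suc k)) = N (z ^ Suc k * z)" by (simp only: power_Suc2)
    also have "\<dots> \<le> N (z ^ Suc k) * N z" using sub by blast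
    also have "\<dots> \<le> q ^ Suc k * q" using Suc q0 Nnn by (simp add: q_def mult_right_mono)
    finally show ?case by (metis power_Suc2)
  qed
  have pw': "N (z ^ k) \<le> q ^ k" if "1 \<le> k" for k
    using pw[of "k - 1"] that by simp
  have lim: "(\<lambda>k. q ^ k) \<longlonglongrightarrow> 0" using q0 by (intro LIMSEQ_power_zero) auto
  have small: "\<exists>M. \<forall>k\<ge>M. q ^ k < e" if "e > 0" for e
  proof -
    from lim that obtain M where "\<forall>k\<ge>M. norm (q ^ k - 0) < e"
      unfolding LIMSEQ_def dist_real_def by auto
    then show ?thesis using q0 by auto
  qed
  have diffb: "N (S m - S k) \<le> q ^ k / (1 - q)" if "1 \<le> k" "k \<le> m" for m k
  proof -
    have "S m = S k + (\<Sum>j\<in>{k..<m}. z ^ j)"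
      unfolding S_def using that sum.atLeastLessThan_concat[of 0 k m "\<lambda>j. z ^ j"]
      by (simp add: atLeast0LessThan)
    then have "N (S m - S k) = N (\<Sum>j\<in>{k..<m}. z ^ j)" by simp
    also have "\<dots> \<le> (\<Sum>j\<in>{k..<m}. N (z ^ j))" by (rule N_sum_le[OF N00 tri])
    also have "\<dots> \<le> (\<Sum>j\<in>{k..<m}. q ^ j)" using that by (intro sum_mono pw') auto
    also have "\<dots> = (q ^ k - q ^ m) / (1 - q)" using geo_sum[OF that(2), of q] q0
      by (simp add: field_simps)
    also have "\<dots> \<le> q ^ k / (1 - q)" using q0 by (simp add: divide_right_mono)
    finally show ?thesis .
  qed
  have cauchy: "\<forall>e>0. \<exists>M. \<forall>m\<ge>M. \<forall>k\<ge>M. N (S m - S k) < e"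
  proof (intro allI impI)
    fix e :: real assume e: "e > 0"
    then have "e * (1 - q) > 0" using q0 by simp
    then obtain M where M: "\<forall>k\<ge>M. q ^ k < e * (1 - q)" using small by blast
    have b: "N (S m - S k) < e" if "m \<ge> Suc M" "k \<ge> Suc M" "k \<le> m" for m k
    proof -
      have "N (S m - S k) \<le> q ^ k / (1 - q)" using diffb that by simp
      also have "\<dots> < e" using M that q0 by (simp add: divide_less_eq)
      finally show ?thesis .
    qed
    show "\<exists>M. \<forall>m\<ge>M. \<forall>k\<ge>M. N (S m - S k) < e"
    proof (intro exI allI impI)
      fix m k assume "Suc M \<le> m" "Suc M \<le> k"
      show "N (S m - S k) < e"
      proof (cases "k \<le> m")
        case True then show ?thesis using b \<open>Suc M \<le> m\<close> \<open>Suc M \<le> k\<close> by blast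
      next
        case False
        then have "N (S k - S m) < e" using b \<open>Suc M \<le> m\<close> \<open>Suc M \<le> k\<close> by simp
        moreover have "S m - S k = - (S k - S m)" by simp
        ultimately show ?thesis using neg by metis
      qed
    qed
  qed
  then obtain L where L: "\<forall>e>0. \<exists>M. \<forall>m\<ge>M. N (S m - L) < e" using comp by blast
  have one: "w = 1" if wb: "\<And>m. 1 \<le> m \<Longrightarrow> N (w - 1) \<le> C * N (S m - L) + q ^ m" and C: "C \<ge> 0" for w C
  proof (rule ccontr)
    assume "w \<noteq> 1"
    then have d: "N (w - 1) > 0" using N0 Nnn by (metis eq_iff_diff_eq_0 less_eq_real_def)
    define e where "e = N (w - 1) / (2 * (C + 1))"
    have e: "e > 0" using d C by (simp add: e_def)
    obtain M1 where M1: "\<forall>m\<ge>M1. N (S m - L) < e" using L e by blast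
    obtain M2 where M2: "\<forall>k\<ge>M2. q ^ k < e" using small e by blast
    define m where "m = Suc (max M1 M2)"
    have m1: "N (S m - L) < e" using M1 unfolding m_def by simp
    have m2: "q ^ m < e" using M2[rule_format, of m] unfolding m_def by simp
    have "N (w - 1) \<le> C * N (S m - L) + q ^ m" using wb[of m] m_def by linarith
    also have "\<dots> \<le> C * e + e" using m1 m2 C
      by (intro add_mono mult_left_mono) (auto intro: less_imp_le)
    also have "\<dots> = (C + 1) * e" by (simp add: algebra_simps)
    also have "\<dots> = N (w - 1) / 2" using C unfolding e_def
    proof -
      have "C + 1 \<noteq> 0" using C by simp
      then show "(C + 1) * (N (w - 1) / (2 * (C + 1))) = N (w - 1) / 2" by (simp add: field_simps)
    qed
    finally show False using d by simp
  qed
  have NL: "N (L - S m) = N (S m - L)" for m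
  proof -
    have "L - S m = - (S m - L)" by simp
    then show ?thesis using neg by metis
  qed
  have r: "(1 - z) * L = 1"
  proof (rule one[where C="N (1 - z)"])
    fix m :: nat assume m: "1 \<le> m"
    have "(1 - z) * L - 1 = (1 - z) * (L - S m) + ((1 - z) * S m - 1)" by (simp add: algebra_simps)
    also have "(1 - z) * S m - 1 = - (z ^ m)" unfolding S_def tele by simp
    finally have "N ((1 - z) * L - 1) \<le> N ((1 - z) * (L - S m)) + N (- (z ^ m))" using tri by metis
    also have "\<dots> \<le> N (1 - z) * N (S m - L) + q ^ m"
      using sub pw'[OF m] neg NL by (metis add_mono)
    finally show "N ((1 - z) * L - 1) \<le> N (1 - z) * N (S m - L) + q ^ m" .
  qed (use Nnn in auto)
  have l: "L * (1 - z) = 1"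
  proof (rule one[where C="N (1 - z)"])
    fix m :: nat assume m: "1 \<le> m"
    have "L * (1 - z) - 1 = (L - S m) * (1 - z) + (S m * (1 - z) - 1)" by (simp add: algebra_simps)
    also have "S m * (1 - z) - 1 = - (z ^ m)" unfolding S_def tele by simp
    finally have "N (L * (1 - z) - 1) \<le> N ((L - S m) * (1 - z)) + N (- (z ^ m))" using tri by metis
    also have "\<dots> \<le> N (S m - L) * N (1 - z) + q ^ m"
      using sub pw'[OF m] neg NL by (metis add_mono)
    finally show "N (L * (1 - z) - 1) \<le> N (1 - z) * N (S m - L) + q ^ m" by (simp add: mult.commute)
  qed (use Nnn in auto)
  show ?thesis using r l unfolding units_of_alg_def by blast
qed

lemma fin_case:
  assumes ka: "k_algebra s" and fd: "fin_dim_alg s" and x1: "x 1 \<in> units_of_alg" and n: "1 \<le> n"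
  shows "finite {\<alpha>. vpt s n x \<alpha> \<notin> units_of_alg}"
proof -
  interpret vector_space s using ka kalg_vs by blast
  obtain Bf where Bf: "finite Bf" "span Bf = UNIV" using fd unfolding fin_dim_alg_def by blast
  obtain Bas where Bas: "independent Bas" "UNIV \<subseteq> span Bas"
    using basis_exists[of UNIV] by blast
  have finB: "finite Bas" using independent_span_bound[OF Bf(1) Bas(1)] Bf(2) by auto
  have spB: "span Bas = UNIV" using Bas(2) by auto
  interpret fdv: finite_dimensional_vector_space s Bas
    by unfold_locales (fact finB, fact Bas(1), fact spB)
  define m where "m = card Bas"
  obtain b where bb: "bij_betw b {0..<m} Bas" using ex_bij_betw_nat_finite[OF finB] m_def by blast
  have binj: "inj_on b {0..<m}" and bim: "b ` {0..<m} = Bas" using bb by (auto simp: bij_betw_def)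
  define rep where "rep v = representation Bas v" for v
  have inS: "v \<in> span Bas" for v using spB by simp
  have R1: "(\<Sum>c<m. s (rep v (b c)) (b c)) = v" for v
  proof -
    have "(\<Sum>c<m. s (rep v (b c)) (b c)) = (\<Sum>u\<in>b ` {0..<m}. s (rep v u) u)"
      using binj by (simp add: sum.reindex lessThan_atLeast0)
    also have "\<dots> = v" unfolding bim rep_def
      by (rule sum_representation_eq[OF Bas(1) inS finB order_refl])
    finally show ?thesis .
  qed
  have Rsum: "rep (\<Sum>i\<in>I. s (f i) (g i)) u = (\<Sum>i\<in>I. f i * rep (g i) u)" for I f g u
    unfolding rep_def
    by (simp add: representation_sum[OF Bas(1)] representation_scale[OF Bas(1)] inS span_scale)
  have Rb: "rep (b c) (b r) = (if r = c then 1 else 0)" if "r < m" "c < m" for r c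
  proof -
    have "b c \<in> Bas" using bim that by auto
    then have "rep (b c) = (\<lambda>v. if v = b c then 1 else 0)" unfolding rep_def
      by (rule representation_basis[OF Bas(1)])
    then show ?thesis using binj that by (auto simp: inj_on_def)
  qed
  define emb where "emb (v :: 'a vec) = (\<Sum>c<m. s (v $ c) (b c))" for v
  have R3: "rep (emb v) (b r) = v $ r" if "r < m" for v r
  proof -
    have "rep (emb v) (b r) = (\<Sum>c<m. v $ c * rep (b c) (b r))" unfolding emb_def by (rule Rsum)
    also have "\<dots> = (\<Sum>c<m. if c = r then v $ c else 0)"
      by (rule sum.cong) (auto simp: Rb that)
    also have "\<dots> = v $ r" using that by simp
    finally show ?thesis .
  qed
  define Lm where "Lm a = mat m m (\<lambda>(r, c). rep (a * b c) (b r))" for a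
  have Lcar: "Lm a \<in> carrier_mat m m" for a by (simp add: Lm_def)
  have Lv: "(Lm a *\<^sub>v v) $ r = rep (a * emb v) (b r)" if "r < m" "v \<in> carrier_vec m" for a v r
  proof -
    have "(Lm a *\<^sub>v v) $ r = (\<Sum>c\<in>{0..<m}. rep (a * b c) (b r) * v $ c)"
      using that by (simp add: Lm_def scalar_prod_def)
    also have "\<dots> = rep (\<Sum>c<m. s (v $ c) (a * b c)) (b r)"
      by (simp add: Rsum mult.commute lessThan_atLeast0)
    also have "(\<Sum>c<m. s (v $ c) (a * b c)) = a * emb v"
      by (simp add: emb_def sum_distrib_left kalg_mult_scale[OF ka])
    finally show ?thesis .
  qed
  have det0: "det (Lm a) = 0 \<longleftrightarrow> (\<exists>w. w \<noteq> 0 \<and> a * w = 0)" for a :: 'b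
  proof
    assume "det (Lm a) = 0"
    then obtain v where v: "v \<in> carrier_vec m" "v \<noteq> 0\<^sub>v m" "Lm a *\<^sub>v v = 0\<^sub>v m"
      using det_0_iff_vec_prod_zero_field[OF Lcar] by blast
    have "rep (a * emb v) (b r) = 0" if "r < m" for r
      using Lv[OF that v(1), of a] v(3) that by simp
    then have "a * emb v = 0" using R1[of "a * emb v"] by simp
    moreover have "emb v \<noteq> 0"
    proof
      assume e0: "emb v = 0"
      have "v $ r = 0" if "r < m" for r
        using R3[OF that, of v] e0 by (simp add: rep_def representation_zero)
      then have "v = 0\<^sub>v m" using v(1) by (intro eq_vecI) auto
      with v(2) show False by simp
    qed
    ultimately show "\<exists>w. w \<noteq> 0 \<and> a * w = 0" by blast
  next
    assume "\<exists>w. w \<noteq> 0 \<and> a * w = 0"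
    then obtain w where w: "w \<noteq> 0" "a * w = 0" by blast
    define v where "v = vec m (\<lambda>c. rep w (b c))"
    have vc: "v \<in> carrier_vec m" by (simp add: v_def)
    have ev: "emb v = w" unfolding emb_def v_def using R1[of w] by simp
    have "v \<noteq> 0\<^sub>v m"
    proof
      assume "v = 0\<^sub>v m"
      then have "emb v = 0" unfolding emb_def by simp
      with ev w(1) show False by simp
    qed
    moreover have "Lm a *\<^sub>v v = 0\<^sub>v m"
    proof (rule eq_vecI)
      fix r assume "r < dim_vec (0\<^sub>v m :: 'a vec)"
      then have r: "r < m" by simp
      show "(Lm a *\<^sub>v v) $ r = 0\<^sub>v m $ r"
        using Lv[OF r vc, of a] ev w(2) r by (simp add: rep_def representation_zero)
    qed (simp add: Lm_def)
    ultimately show "det (Lm a) = 0"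
      using det_0_iff_vec_prod_zero_field[OF Lcar] vc by blast
  qed
  have nonunit: "\<exists>w. w \<noteq> 0 \<and> a * w = 0" if "a \<notin> units_of_alg" for a :: 'b
  proof (rule ccontr)
    assume nz: "\<not> (\<exists>w. w \<noteq> 0 \<and> a * w = 0)"
    have lin: "Vector_Spaces.linear s s (\<lambda>y. a * y)"
      by (rule linear_module_homI)
         (auto simp: module_hom_iff module_iff_vector_space vector_space_axioms
            distrib_left kalg_mult_scale[OF ka])
    have "inj (\<lambda>y. a * y)"
    proof (rule injI)
      fix y y' assume "a * y = a * y'"
      then have "a * (y - y') = 0" by (simp add: right_diff_distrib)
      with nz have "y - y' = 0" by blast
      then show "y = y'" by simp
    qed
    then have "surj (\<lambda>y. a * y)" by (rule fdv.linear_inj_imp_surj[OF lin])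
    then obtain ai where ai: "a * ai = 1" by (metis surjD)
    have "a * (ai * a - 1) = 0" using ai by (simp add: right_diff_distrib mult.assoc[symmetric])
    with nz have "ai * a - 1 = 0" by blast
    then have "ai * a = 1" by simp
    with ai that show False by (auto simp: units_of_alg_def)
  qed
  have unit: "\<not> (\<exists>w. w \<noteq> 0 \<and> a * w = 0)" if au: "a \<in> units_of_alg" for a :: 'b
  proof
    assume "\<exists>w. w \<noteq> 0 \<and> a * w = 0"
    then obtain w where w: "w \<noteq> 0" "a * w = 0" by blast
    obtain ai where "ai * a = 1" using au by (auto simp: units_of_alg_def)
    then have "w = ai * (a * w)" by (simp add: mult.assoc[symmetric])
    with w show False by simp
  qed
  define Mp where "Mp = mat m m (\<lambda>(r, c). \<Sum>i\<in>{1..n}. monom (rep (x i * b c) (b r)) (i - 1))"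
  have Mev: "map_mat (\<lambda>p. poly p \<alpha>) Mp = Lm (vpt s n x \<alpha>)" for \<alpha>
  proof (rule eq_matI)
    fix r c assume "r < dim_row (Lm (vpt s n x \<alpha>))" "c < dim_col (Lm (vpt s n x \<alpha>))"
    then have rc: "r < m" "c < m" by (auto simp: Lm_def)
    have "vpt s n x \<alpha> * b c = (\<Sum>i\<in>{1..n}. s (\<alpha> ^ (i - 1)) (x i * b c))"
      by (simp add: vpt_def sum_distrib_right kalg_mult_scale[OF ka])
    then have "rep (vpt s n x \<alpha> * b c) (b r) = (\<Sum>i\<in>{1..n}. \<alpha> ^ (i - 1) * rep (x i * b c) (b r))"
      by (simp add: Rsum)
    then show "map_mat (\<lambda>p. poly p \<alpha>) Mp $$ (r, c) = Lm (vpt s n x \<alpha>) $$ (r, c)"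
      using rc by (simp add: Mp_def Lm_def poly_sum poly_monom mult.commute)
  qed (simp_all add: Mp_def Lm_def)
  have Dev: "poly (det Mp) \<alpha> = det (Lm (vpt s n x \<alpha>))" for \<alpha>
  proof -
    interpret ph: comm_ring_hom "\<lambda>p. poly p \<alpha>" by unfold_locales auto
    show ?thesis using ph.hom_det[of Mp] Mev by simp
  qed
  have "det (Lm (x 1)) \<noteq> 0" using det0 unit[OF x1] by blast
  then have "poly (det Mp) 0 \<noteq> 0" using Dev[of 0] vpt_zero[OF ka n] by simp
  then have D0: "det Mp \<noteq> 0" by auto
  have "{\<alpha>. vpt s n x \<alpha> \<notin> units_of_alg} \<subseteq> {\<alpha>. poly (det Mp) \<alpha> = 0}"
    using nonunit det0 Dev by auto
  moreover have "finite {\<alpha>. poly (det Mp) \<alpha> = 0}" by (rule poly_roots_finite[OF D0])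
  ultimately show ?thesis by (rule finite_subset)
qed

lemma banach_case:
  assumes ka: "k_algebra s" and ba: "banach_alg s" and x1: "x 1 \<in> units_of_alg" and n: "1 \<le> n"
  shows "infinite {\<alpha>. vpt s n x \<alpha> \<in> units_of_alg}"
proof -
  interpret vector_space s using ka kalg_vs by blast
  have ex: "\<exists>(\<phi>::'a \<Rightarrow> complex) (N::'b \<Rightarrow> real).
       inj \<phi> \<and> (\<forall>a b. \<phi> (a + b) = \<phi> a + \<phi> b \<and> \<phi> (a * b) = \<phi> a * \<phi> b) \<and> \<phi> 1 = 1 \<and>
       (range \<phi> = \<real> \<or> range \<phi> = UNIV) \<and>
       (\<forall>x. N x \<ge> 0) \<and> (\<forall>x. N x = 0 \<longleftrightarrow> x = 0) \<and>
       (\<forall>x y. N (x + y) \<le> N x + N y) \<and>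
       (\<forall>c x. N (s c x) = cmod (\<phi> c) * N x) \<and>
       (\<forall>x y. N (x * y) \<le> N x * N y) \<and>
       (\<forall>f::nat \<Rightarrow> 'b. (\<forall>e>0. \<exists>M. \<forall>m\<ge>M. \<forall>k\<ge>M. N (f m - f k) < e)
            \<longrightarrow> (\<exists>L. \<forall>e>0. \<exists>M. \<forall>m\<ge>M. N (f m - L) < e))"
    using ba unfolding banach_alg_def .
  then obtain \<phi> :: "'a \<Rightarrow> complex" and N :: "'b \<Rightarrow> real" where HH:
       "inj \<phi> \<and> (\<forall>a b. \<phi> (a + b) = \<phi> a + \<phi> b \<and> \<phi> (a * b) = \<phi> a * \<phi> b) \<and> \<phi> 1 = 1 \<and>
       (range \<phi> = \<real> \<or> range \<phi> = UNIV) \<and>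
       (\<forall>x. N x \<ge> 0) \<and> (\<forall>x. N x = 0 \<longleftrightarrow> x = 0) \<and>
       (\<forall>x y. N (x + y) \<le> N x + N y) \<and>
       (\<forall>c x. N (s c x) = cmod (\<phi> c) * N x) \<and>
       (\<forall>x y. N (x * y) \<le> N x * N y) \<and>
       (\<forall>f::nat \<Rightarrow> 'b. (\<forall>e>0. \<exists>M. \<forall>m\<ge>M. \<forall>k\<ge>M. N (f m - f k) < e)
            \<longrightarrow> (\<exists>L. \<forall>e>0. \<exists>M. \<forall>m\<ge>M. N (f m - L) < e))"
    by (elim exE)
  have hom: "\<forall>a b. \<phi> (a + b) = \<phi> a + \<phi> b \<and> \<phi> (a * b) = \<phi> a * \<phi> b" using HH by (elim conjE)
  have phi1: "\<phi> 1 = 1" using HH by (elim conjE)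
  have rng: "range \<phi> = \<real> \<or> range \<phi> = UNIV" using HH by (elim conjE)
  have Nnn: "\<forall>x. N x \<ge> 0" using HH by (elim conjE)
  have N0: "\<forall>x. N x = 0 \<longleftrightarrow> x = 0" using HH by (elim conjE)
  have tri: "\<forall>x y. N (x + y) \<le> N x + N y" using HH by (elim conjE)
  have scl: "\<forall>c x. N (s c x) = cmod (\<phi> c) * N x" using HH by (elim conjE)
  have sub: "\<forall>x y. N (x * y) \<le> N x * N y" using HH by (elim conjE)
  have comp: "\<forall>f::nat \<Rightarrow> 'b. (\<forall>e>0. \<exists>M. \<forall>m\<ge>M. \<forall>k\<ge>M. N (f m - f k) < e)
            \<longrightarrow> (\<exists>L. \<forall>e>0. \<exists>M. \<forall>m\<ge>M. N (f m - L) < e)" using HH by (elim conjE)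
  have N00: "N 0 = 0" using N0 by simp
  have phi0: "\<phi> 0 = 0"
  proof -
    have "\<phi> (0 + 0) = \<phi> 0 + \<phi> 0" using hom by blast
    then show ?thesis by simp
  qed
  have phim1: "\<phi> (-1) = -1"
  proof -
    have "\<phi> (-1 + 1) = \<phi> (-1) + \<phi> 1" using hom by blast
    then show ?thesis using phi0 phi1 by (simp add: eq_neg_iff_add_eq_0)
  qed
  have neg: "\<forall>x. N (- x) = N x"
  proof
    fix v
    have "s (-1) v = - v" by (simp add: scale_minus_left)
    then have "N (- v) = cmod (\<phi> (-1)) * N v" using scl by metis
    then show "N (- v) = N v" using phim1 by simp
  qed
  have phipow: "\<phi> (a ^ k) = \<phi> a ^ k" for a k
  proof (induction k)
    case 0 then show ?case using phi1 by simp
  next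
    case (Suc k)
    have "\<phi> (a ^ Suc k) = \<phi> a * \<phi> (a ^ k)" using hom by simp
    then show ?case using Suc by simp
  qed
  obtain x1i where x1i: "x 1 * x1i = 1" "x1i * x 1 = 1" using x1 by (auto simp: units_of_alg_def)
  define R where "R \<alpha> = (\<Sum>i\<in>{2..n}. s (\<alpha> ^ (i - 1)) (x i))" for \<alpha>
  have PR: "vpt s n x \<alpha> = x 1 + R \<alpha>" for \<alpha>
  proof -
    have "vpt s n x \<alpha> = s (\<alpha> ^ (1 - 1)) (x 1) + (\<Sum>i\<in>{Suc 1..n}. s (\<alpha> ^ (i - 1)) (x i))"
      unfolding vpt_def using n by (rule sum.atLeast_Suc_atMost)
    then show ?thesis by (simp add: R_def numeral_2_eq_2)
  qed
  define C where "C = (\<Sum>i\<in>{2..n}. N (x i))"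
  have C0: "C \<ge> 0" unfolding C_def using Nnn by (simp add: sum_nonneg)
  define K where "K = N x1i * C + 1"
  have K1: "K \<ge> 1" using C0 Nnn by (simp add: K_def)
  have Rb: "N (R \<alpha>) \<le> cmod (\<phi> \<alpha>) * C" if t1: "cmod (\<phi> \<alpha>) \<le> 1" for \<alpha>
  proof -
    have "N (R \<alpha>) \<le> (\<Sum>i\<in>{2..n}. N (s (\<alpha> ^ (i - 1)) (x i)))"
      unfolding R_def by (rule N_sum_le[OF N00 tri])
    also have "\<dots> = (\<Sum>i\<in>{2..n}. cmod (\<phi> \<alpha>) ^ (i - 1) * N (x i))"
      using scl phipow by (simp add: norm_power)
    also have "\<dots> \<le> (\<Sum>i\<in>{2..n}. cmod (\<phi> \<alpha>) * N (x i))"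
    proof (rule sum_mono)
      fix i assume "i \<in> {2..n}"
      then have "cmod (\<phi> \<alpha>) ^ (i - 1) \<le> cmod (\<phi> \<alpha>) ^ 1"
        using t1 by (intro power_decreasing) auto
      then show "cmod (\<phi> \<alpha>) ^ (i - 1) * N (x i) \<le> cmod (\<phi> \<alpha>) * N (x i)"
        using Nnn by (simp add: mult_right_mono)
    qed
    also have "\<dots> = cmod (\<phi> \<alpha>) * C" unfolding C_def by (simp add: sum_distrib_left)
    finally show ?thesis .
  qed
  have good: "vpt s n x \<alpha> \<in> units_of_alg" if t: "cmod (\<phi> \<alpha>) < 1 / K" for \<alpha>
  proof -
    define t where "t = cmod (\<phi> \<alpha>)"
    have t1: "t \<le> 1" using t K1 t_def by (smt (verit) divide_le_eq_1)
    have t0: "t \<ge> 0" using t_def by simp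
    define z where "z = - (x1i * R \<alpha>)"
    have "1 - z = x1i * vpt s n x \<alpha>" unfolding z_def PR using x1i by (simp add: distrib_left)
    have "N z = N (x1i * R \<alpha>)" unfolding z_def using neg by blast
    also have "\<dots> \<le> N x1i * N (R \<alpha>)" using sub by blast
    also have "\<dots> \<le> N x1i * (t * C)" using Rb[OF t1[unfolded t_def]] Nnn t_def
      by (simp add: mult_left_mono)
    also have "\<dots> = t * (K - 1)" by (simp add: K_def)
    also have "\<dots> < 1"
    proof -
      have "t * K < 1" using t t_def K1 by (simp add: less_divide_eq mult.commute)
      then show ?thesis using t0 by (smt (verit) mult_nonneg_nonneg right_diff_distrib mult_1_right)
    qed
    finally have "1 - z \<in> units_of_alg" by (rule neumann[OF Nnn N0 tri neg sub comp])
    then have u: "x1i * vpt s n x \<alpha> \<in> units_of_alg" using \<open>1 - z = _\<close> by simp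
    have "vpt s n x \<alpha> = x 1 * (x1i * vpt s n x \<alpha>)" using x1i by (simp add: mult.assoc[symmetric])
    then show ?thesis using units_mult[OF x1 u] by simp
  qed
  show ?thesis
  proof
    assume fin: "finite {\<alpha>. vpt s n x \<alpha> \<in> units_of_alg}"
    have "(of_real :: real \<Rightarrow> complex) ` {0<..<1/K} \<subseteq> \<phi> ` {\<alpha>. vpt s n x \<alpha> \<in> units_of_alg}"
    proof
      fix w :: complex assume "w \<in> of_real ` {0<..<1/K}"
      then obtain r where r: "r \<in> {0<..<1/K}" "w = of_real r" by auto
      have "w \<in> range \<phi>" using rng r(2) by auto
      then obtain \<alpha> where a: "w = \<phi> \<alpha>" by auto
      have "\<phi> \<alpha> = of_real r" using a r(2) by simp
      then have "cmod (\<phi> \<alpha>) = \<bar>r\<bar>" by simp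
      then have "cmod (\<phi> \<alpha>) < 1 / K" using r(1) by simp
      then show "w \<in> \<phi> ` {\<alpha>. vpt s n x \<alpha> \<in> units_of_alg}" using good a by blast
    qed
    moreover have "finite (\<phi> ` {\<alpha>. vpt s n x \<alpha> \<in> units_of_alg})" using fin by simp
    ultimately have "finite (of_real ` {0<..<1/K} :: complex set)" by (rule finite_subset)
    moreover have "inj_on (of_real :: real \<Rightarrow> complex) {0<..<1/K}" by (auto simp: inj_on_def)
    ultimately have "finite {0<..<1/K::real}" using finite_image_iff by blast
    moreover have "(0::real) < 1/K" using K1 by simp
    ultimately show False using infinite_Ioo by blast
  qed
qed

theorem lemma2p7:
  fixes s :: "'a::field \<Rightarrow> 'b::ring_1 \<Rightarrow> 'b"
    and V :: "'b set" and n :: nat and x :: "nat \<Rightarrow> 'b"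
  assumes "infinite (UNIV :: 'a set)"
    and "k_algebra s"
    and "H_s s"
    and "module.subspace s V"
    and "vector_space.dim s V = n"
    and "V \<inter> units_of_alg \<noteq> {}"
    and "inj_on x {1..n}"
    and "\<not> module.dependent s (x ` {1..n})"
    and "module.span s (x ` {1..n}) = V"
    and "1 \<le> n"
    and "x 1 \<in> units_of_alg"
  shows "(\<forall>a :: nat \<Rightarrow> 'a. inj_on a {1..n} \<longrightarrow>
            inj_on (\<lambda>j. vpt s n x (a j)) {1..n} \<and>
            \<not> module.dependent s ((\<lambda>j. vpt s n x (a j)) ` {1..n}) \<and>
            module.span s ((\<lambda>j. vpt s n x (a j)) ` {1..n}) = V)
       \<and> infinite {\<alpha>. vpt s n x \<alpha> \<in> units_of_alg}
       \<and> (\<exists>B. B \<subseteq> range (vpt s n x) \<and> B \<subseteq> units_of_alg \<and>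
              \<not> module.dependent s B \<and> module.span s B = V)"
proof -
  note inf = assms(1) and ka = assms(2) and hs = assms(3) and injx = assms(7) and ind = assms(8)
    and sp = assms(9) and n = assms(10) and x1 = assms(11)
  have vs: "vector_space s" using ka by (rule kalg_vs)
  interpret vector_space s by fact
  have p1: "\<forall>a :: nat \<Rightarrow> 'a. inj_on a {1..n} \<longrightarrow>
            inj_on (\<lambda>j. vpt s n x (a j)) {1..n} \<and>
            \<not> dependent ((\<lambda>j. vpt s n x (a j)) ` {1..n}) \<and>
            span ((\<lambda>j. vpt s n x (a j)) ` {1..n}) = V"
  proof (intro allI impI)
    fix a :: "nat \<Rightarrow> 'a" assume "inj_on a {1..n}"
    then show "inj_on (\<lambda>j. vpt s n x (a j)) {1..n} \<and>
            \<not> dependent ((\<lambda>j. vpt s n x (a j)) ` {1..n}) \<and>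
            span ((\<lambda>j. vpt s n x (a j)) ` {1..n}) = V" by (rule part1[OF vs injx ind sp])
  qed
  have "x 1 \<in> span (x ` {1..n})" using n by (intro span_base) auto
  then have x1V: "x 1 \<in> V" using sp by simp
  have key: "\<forall>a. inj_on a {1..n} \<longrightarrow> x 1 \<in> span ((\<lambda>j. vpt s n x (a j)) ` {1..n})"
  proof (intro allI impI)
    fix a :: "nat \<Rightarrow> 'a" assume "inj_on a {1..n}"
    from p1[rule_format, OF this] have "span ((\<lambda>j. vpt s n x (a j)) ` {1..n}) = V" by (rule conjE) (erule conjE)
    with x1V show "x 1 \<in> span ((\<lambda>j. vpt s n x (a j)) ` {1..n})" by simp
  qed
  have p2: "infinite {\<alpha>. vpt s n x \<alpha> \<in> units_of_alg}"
  proof -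
    have c: "fin_dim_alg s \<or> banach_alg s \<or> prod_fields_alg s" using hs unfolding H_s_def .
    show ?thesis
    proof (cases "banach_alg s")
      case True then show ?thesis by (rule banach_case[where x=x and s=s and n=n, OF ka _ x1 n])
    next
      case False
      then have "fin_dim_alg s \<or> prod_fields_alg s" using c by blast
      then have fb: "finite {\<alpha>. vpt s n x \<alpha> \<notin> units_of_alg}"
      proof
        assume "fin_dim_alg s" then show ?thesis by (rule fin_case[where x=x and s=s and n=n, OF ka _ x1 n])
      next
        assume "prod_fields_alg s" then show ?thesis by (rule prod_case[where x=x and s=s and n=n, OF ka _ x1 key])
      qed
      have eq: "{\<alpha>. vpt s n x \<alpha> \<in> units_of_alg} = UNIV - {\<alpha>. vpt s n x \<alpha> \<notin> units_of_alg}" by blast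
      show ?thesis unfolding eq by (rule Diff_infinite_finite[OF fb inf])
    qed
  qed
  obtain S where S: "S \<subseteq> {\<alpha>. vpt s n x \<alpha> \<in> units_of_alg}" "finite S" "card S = n"
    using infinite_arbitrarily_large[OF p2] by blast
  obtain a where a: "bij_betw a {1..n} S" using ex_bij_betw_nat_finite_1[OF S(2)] S(3) by auto
  have ia: "inj_on a {1..n}" using a by (simp add: bij_betw_def)
  have p3: "\<exists>B. B \<subseteq> range (vpt s n x) \<and> B \<subseteq> units_of_alg \<and> \<not> dependent B \<and> span B = V"
  proof (intro exI conjI)
    show "(\<lambda>j. vpt s n x (a j)) ` {1..n} \<subseteq> range (vpt s n x)" by auto
    show "(\<lambda>j. vpt s n x (a j)) ` {1..n} \<subseteq> units_of_alg"
      using a S(1) by (auto simp: bij_betw_def)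
    show "\<not> dependent ((\<lambda>j. vpt s n x (a j)) ` {1..n})" using p1[rule_format, OF ia] by (elim conjE)
    show "span ((\<lambda>j. vpt s n x (a j)) ` {1..n}) = V" using p1[rule_format, OF ia] by (elim conjE)
  qed
  show ?thesis by (intro conjI) (fact p1, fact p2, fact p3)
qed

end
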